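(* Let $n\ge2$, $A\in\mathbb{R}^{n\times m}$, $B\in\mathbb{R}^{m\times n}$, and let $C$ be a cycle of the DSR$^{[2]}$ graph $G^{[2]}_{A,B}$. (i) If $C$ is twisted, then $\pi(C)$ is an s-walk if and only if $C$ is an s-cycle. (ii) If $C$ is direct, $\pi(C)=\{W',W''\}$, and both $W'$ and $W''$ are s-walks, then $C$ is an s-cycle.
   Context: DSR graphs: for $A\in\mathbb{R}^{n\times m}$, $B\in\mathbb{R}^{m\times n}$, $G_{A,B}$ is the signed, labelled bipartite digraph with S-vertices $S_1,\dots,S_n$ and R-vertices $R_1,\dots,R_m$, an arc $R_j\to S_i$ of sign $\mathrm{sign}(A_{ij})$ iff $A_{ij}\ne0$, an arc $S_i\to R_j$ of sign $\mathrm{sign}(B_{ji})$ iff $B_{ji}\ne0$, with antiparallel arcs of equal sign merged into an undirected edge. An edge arising from $A_{ij}\ne0$ (R-to-S or undirected) has label $|A_{ij}|$; an edge with only S-to-R orientation has label $\infty$. Walks traverse edges consistently with orientation (empty walks allowed); a cycle is a nonempty closed walk with no repeated vertex except first$=$last. A closed walk $(e_1,\dots,e_{2r})$ ($r\ge0$) is an s-walk if all its labels are finite and $\prod_{i=1}^r l(e_{2i-1})=\prod_{i=1}^r l(e_{2i})$; an s-cycle is a cycle which is an s-walk. DSR$^{[2]}$ graph: $\overline{\mathbf L}^A\in\mathbb{R}^{\binom n2\times mn}$ has rows indexed by $(i,j)$, $i<j$, columns by $(k,l)$, $1\le k\le m$, $1\le l\le n$, entries $A_{jk}$ if $l=i$,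 $-A_{ik}$ if $l=j$, $0$ otherwise; $\underline{\mathbf L}^B\in\mathbb{R}^{mn\times\binom n2}$ has $(k,l),(i,j)$ entry $B_{kj}$ if $l=i$, $-B_{ki}$ if $l=j$, $0$ otherwise. $G^{[2]}_{A,B}:=G_{\overline{\mathbf L}^A,\underline{\mathbf L}^B}$, with S-vertices $ij=ji$ and R-vertices $k^l$; an edge $(ij,k^l)$ exists only if $l\in\{i,j\}$. The projection $\pi$ sends an edge $(ij,k^j)$ to the edge $(S_i,R_k)$ of $G_{A,B}$, which has the same direction and label. Direct/twisted and $\pi(C)$: let $C$ have S-vertex sequence $a_1b_1,\dots,a_{T+1}b_{T+1}=a_1b_1$, and write the segment from $a_rb_r$ to $a_{r+1}b_{r+1}$ as $(a_rb_r,k^l,a_{r+1}b_{r+1})$ with $l$ the common index; its projection is a length-2 walk from $S_x$ to $S_y$, where $x$ is the element of $\{a_r,b_r\}$ other than $l$ and $y$ that of $\{a_{r+1},b_{r+1}\}$ other than $l$. Starting from empty walks at $S_{a_1}$ and $S_{b_1}$, for $r=1,\dots,T$ append the projected segment to whichever current walk ends at $S_x$. If the final walks $W',W''$ are both closed, $C$ is direct and $\pi(C)=\{W',W''\}$; otherwise $C$ is twisted and $\pi(C)=W'\sqcup W''$ is the closed walk obtained by traversing $W'$ and $W''$ in succession. *)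

theory Defs
  imports Main "HOL-Library.Extended_Real"
begin

text \<open>A DSR graph is given by a set SS of S-vertices, a set RR of R-vertices,
  a function a (a s r plays the role of A_{s r}: arc R_r -> S_s) and a function
  b (b r s plays the role of B_{r s}: arc S_s -> R_r).\<close>

datatype ('s,'r) vert = SV (sv: 's) | RV (rv: 'r)

text \<open>Kinds of edges: undirected (merged antiparallel arcs of equal sign),
  R-to-S arc only, S-to-R arc only.\<close>
datatype ekind = Und | ArcRS | ArcSR

text \<open>An edge joins an S-vertex and an R-vertex and has a kind
  (several edges may join the same pair of vertices).\<close>
type_synonym ('s,'r) edge = "'s \<times> 'r \<times> ekind"

type_synonym ('s,'r) walk = "('s,'r) vert list \<times> ('s,'r) edge list"

definition dsr_edge ::
  "'s set \<Rightarrow> 'r set \<Rightarrow> ('s \<Rightarrow> 'r \<Rightarrow> real) \<Rightarrow> ('r \<Rightarrow> 's \<Rightarrow> real) \<Rightarrow> ('s,'r) edge \<Rightarrow> bool" where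
  "dsr_edge SS RR a b e = (case e of (s, r, kd) \<Rightarrow> s \<in> SS \<and> r \<in> RR \<and>
     (case kd of
        Und \<Rightarrow> a s r \<noteq> 0 \<and> b r s \<noteq> 0 \<and> sgn (a s r) = sgn (b r s)
      | ArcRS \<Rightarrow> a s r \<noteq> 0 \<and> \<not> (b r s \<noteq> 0 \<and> sgn (b r s) = sgn (a s r))
      | ArcSR \<Rightarrow> b r s \<noteq> 0 \<and> \<not> (a s r \<noteq> 0 \<and> sgn (a s r) = sgn (b r s))))"

definition dsr_label :: "('s \<Rightarrow> 'r \<Rightarrow> real) \<Rightarrow> ('s,'r) edge \<Rightarrow> ereal" where
  "dsr_label a e = (case e of (s, r, kd) \<Rightarrow>
     (if kd = ArcSR then \<infinity> else ereal \<bar>a s r\<bar>))"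

definition traverses :: "('s,'r) edge \<Rightarrow> ('s,'r) vert \<Rightarrow> ('s,'r) vert \<Rightarrow> bool" where
  "traverses e u v = (case e of (s, r, kd) \<Rightarrow>
     (u = SV s \<and> v = RV r \<and> kd \<noteq> ArcRS) \<or> (u = RV r \<and> v = SV s \<and> kd \<noteq> ArcSR))"

definition in_vertices :: "'s set \<Rightarrow> 'r set \<Rightarrow> ('s,'r) vert \<Rightarrow> bool" where
  "in_vertices SS RR v = (case v of SV s \<Rightarrow> s \<in> SS | RV r \<Rightarrow> r \<in> RR)"

definition is_walk ::
  "'s set \<Rightarrow> 'r set \<Rightarrow> ('s \<Rightarrow> 'r \<Rightarrow> real) \<Rightarrow> ('r \<Rightarrow> 's \<Rightarrow> real) \<Rightarrow> ('s,'r) walk \<Rightarrow> bool" where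
  "is_walk SS RR a b W = (length (fst W) = Suc (length (snd W)) \<and>
     (\<forall>v \<in> set (fst W). in_vertices SS RR v) \<and>
     (\<forall>i < length (snd W). dsr_edge SS RR a b (snd W ! i) \<and>
        traverses (snd W ! i) (fst W ! i) (fst W ! Suc i)))"

definition closed_walk :: "('s,'r) walk \<Rightarrow> bool" where
  "closed_walk W = (hd (fst W) = last (fst W))"

definition is_cycle ::
  "'s set \<Rightarrow> 'r set \<Rightarrow> ('s \<Rightarrow> 'r \<Rightarrow> real) \<Rightarrow> ('r \<Rightarrow> 's \<Rightarrow> real) \<Rightarrow> ('s,'r) walk \<Rightarrow> bool" where
  "is_cycle SS RR a b W = (is_walk SS RR a b W \<and> snd W \<noteq> [] \<and> closed_walk W \<and>
     distinct (butlast (fst W)))"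

text \<open>s-walk: closed walk (e_1,...,e_{2r}) with all labels finite and
  prod l(e_{2i-1}) = prod l(e_{2i}); with 0-based list indices, the edges at even
  positions versus those at odd positions.\<close>
definition s_walk :: "('s \<Rightarrow> 'r \<Rightarrow> real) \<Rightarrow> ('s,'r) walk \<Rightarrow> bool" where
  "s_walk a W = (closed_walk W \<and> (\<forall>e \<in> set (snd W). dsr_label a e \<noteq> \<infinity>) \<and>
     (\<Prod>i \<in> {i. i < length (snd W) \<and> even i}. dsr_label a (snd W ! i)) =
     (\<Prod>i \<in> {i. i < length (snd W) \<and> odd i}. dsr_label a (snd W ! i)))"

definition s_cycle ::
  "'s set \<Rightarrow> 'r set \<Rightarrow> ('s \<Rightarrow> 'r \<Rightarrow> real) \<Rightarrow> ('r \<Rightarrow> 's \<Rightarrow> real) \<Rightarrow> ('s,'r) walk \<Rightarrow> bool" where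
  "s_cycle SS RR a b W = (is_cycle SS RR a b W \<and> s_walk a W)"

text \<open>Matrices are functions nat => nat => real, indices 1-based.
  G_{A,B}: S-vertices 1..n, R-vertices 1..m, a i k = A i k, b k i = B k i.\<close>

definition S1 :: "nat \<Rightarrow> nat set" where "S1 n = {1..n}"
definition R1 :: "nat \<Rightarrow> nat set" where "R1 m = {1..m}"

text \<open>DSR^[2]: S-vertex ij = ji represented by the pair (i,j) with i < j;
  R-vertex k^l represented by (k,l).\<close>
definition S2 :: "nat \<Rightarrow> (nat \<times> nat) set" where
  "S2 n = {(i, j). 1 \<le> i \<and> i < j \<and> j \<le> n}"
definition R2 :: "nat \<Rightarrow> nat \<Rightarrow> (nat \<times> nat) set" where
  "R2 n m = {1..m} \<times> {1..n}"

definition LA :: "(nat \<Rightarrow> nat \<Rightarrow> real) \<Rightarrow> nat \<times> nat \<Rightarrow> nat \<times> nat \<Rightarrow> real" where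
  "LA A ij kl = (case ij of (i, j) \<Rightarrow> case kl of (k, l) \<Rightarrow>
     (if l = i then A j k else if l = j then - A i k else 0))"

definition LB :: "(nat \<Rightarrow> nat \<Rightarrow> real) \<Rightarrow> nat \<times> nat \<Rightarrow> nat \<times> nat \<Rightarrow> real" where
  "LB B kl ij = (case kl of (k, l) \<Rightarrow> case ij of (i, j) \<Rightarrow>
     (if l = i then B k j else if l = j then - B k i else 0))"

definition other :: "nat \<Rightarrow> nat \<times> nat \<Rightarrow> nat" where
  "other l pq = (case pq of (p, q) \<Rightarrow> if l = q then p else q)"

definition proj_edge :: "(nat \<times> nat, nat \<times> nat) edge \<Rightarrow> (nat, nat) edge" where
  "proj_edge e = (case e of (ij, (k, l), kd) \<Rightarrow> (other l ij, k, kd))"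

text \<open>Rotating a closed walk starting at an R-vertex by one step so that it
  starts at an S-vertex (the paper writes a cycle via its S-vertex sequence).\<close>
definition norm_cycle :: "('s,'r) walk \<Rightarrow> ('s,'r) walk" where
  "norm_cycle W = (case hd (fst W) of
      SV _ \<Rightarrow> W
    | RV _ \<Rightarrow> (tl (fst W) @ [hd (tl (fst W))], tl (snd W) @ [hd (snd W)]))"

definition append_seg :: "(nat, nat) walk \<Rightarrow> (nat, nat) walk \<Rightarrow> (nat, nat) walk" where
  "append_seg W seg = (fst W @ fst seg, snd W @ snd seg)"

text \<open>Processing the r-th segment (0-based) of C (assumed to start at an S-vertex).\<close>
definition proj_step ::
  "(nat \<times> nat, nat \<times> nat) walk \<Rightarrow> nat \<Rightarrow> (nat, nat) walk \<times> (nat, nat) walk \<Rightarrow> (nat, nat) walk \<times> (nat, nat) walk" where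
  "proj_step C r WW = (let vs = fst C; es = snd C;
       k = fst (rv (vs ! (2*r+1))); l = snd (rv (vs ! (2*r+1)));
       x = other l (sv (vs ! (2*r))); y = other l (sv (vs ! (2*r+2)));
       seg = ([RV k, SV y], [proj_edge (es ! (2*r)), proj_edge (es ! (2*r+1))])
     in if last (fst (fst WW)) = SV x then (append_seg (fst WW) seg, snd WW)
        else (fst WW, append_seg (snd WW) seg))"

definition proj_pair :: "(nat \<times> nat, nat \<times> nat) walk \<Rightarrow> (nat, nat) walk \<times> (nat, nat) walk" where
  "proj_pair C = (let C' = norm_cycle C; a1 = fst (sv (hd (fst C'))); b1 = snd (sv (hd (fst C')));
       T = length (snd C') div 2
     in fold (proj_step C') [0..<T] (([SV a1], []), ([SV b1], [])))"

definition is_direct :: "(nat \<times> nat, nat \<times> nat) walk \<Rightarrow> bool" where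
  "is_direct C = (closed_walk (fst (proj_pair C)) \<and> closed_walk (snd (proj_pair C)))"

definition is_twisted :: "(nat \<times> nat, nat \<times> nat) walk \<Rightarrow> bool" where
  "is_twisted C = (\<not> is_direct C)"

text \<open>For a twisted cycle, pi(C) = W' \<squnion> W'': traverse W' then W''.\<close>
definition proj_twisted :: "(nat \<times> nat, nat \<times> nat) walk \<Rightarrow> (nat, nat) walk" where
  "proj_twisted C = (let W1 = fst (proj_pair C); W2 = snd (proj_pair C)
     in (fst W1 @ tl (fst W2), snd W1 @ snd W2))"

end

theory Submission
  imports Defs
begin


definition PE :: "ereal list \<Rightarrow> ereal" where
  "PE xs = (\<Prod>i \<in> {i. i < length xs \<and> even i}. xs ! i)"
definition PO :: "ereal list \<Rightarrow> ereal" where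
  "PO xs = (\<Prod>i \<in> {i. i < length xs \<and> odd i}. xs ! i)"

lemma PE_Nil[simp]: "PE [] = 1" and PO_Nil[simp]: "PO [] = 1"
  by (auto simp: PE_def PO_def)

lemma PE_Cons[simp]: "PE (x#xs) = x * PO xs"
proof -
  have s: "{i. i < length (x#xs) \<and> even i} = insert 0 (Suc ` {j. j < length xs \<and> odd j})"
    apply (rule set_eqI) apply (case_tac xa) by auto
  show ?thesis unfolding PE_def PO_def s
    by (subst prod.insert) (auto simp: prod.reindex)
qed

lemma PO_Cons[simp]: "PO (x#xs) = PE xs"
proof -
  have s: "{i. i < length (x#xs) \<and> odd i} = Suc ` {j. j < length xs \<and> even j}"
    apply (rule set_eqI) apply (case_tac xa) by auto
  show ?thesis unfolding PE_def PO_def s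
    by (auto simp: prod.reindex)
qed

lemma PEO_append:
  "PE (xs@ys) = PE xs * (if even (length xs) then PE ys else PO ys) \<and>
   PO (xs@ys) = PO xs * (if even (length xs) then PO ys else PE ys)"
  by (induction xs) (auto simp: mult.assoc)

lemma PE_append[simp]: "PE (xs@ys) = PE xs * (if even (length xs) then PE ys else PO ys)"
  and PO_append[simp]: "PO (xs@ys) = PO xs * (if even (length xs) then PO ys else PE ys)"
  using PEO_append by blast+

lemma PE_rot: "even (length xs) \<Longrightarrow> xs \<noteq> [] \<Longrightarrow> PE (tl xs @ [hd xs]) = PO xs \<and> PO (tl xs @ [hd xs]) = PE xs"
  by (cases xs) (auto simp: mult.commute)

lemma s_walk_iff: "s_walk a W \<longleftrightarrow> closed_walk W \<and> (\<forall>x\<in>set (map (dsr_label a) (snd W)). x \<noteq> \<infinity>)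
   \<and> PE (map (dsr_label a) (snd W)) = PO (map (dsr_label a) (snd W))"
  unfolding s_walk_def PE_def PO_def by (auto intro!: prod.cong)



definition isS :: "('s,'r) vert \<Rightarrow> bool" where
  "isS v = (case v of SV _ \<Rightarrow> True | RV _ \<Rightarrow> False)"

lemma trav_isS: "traverses e u v \<Longrightarrow> isS v = (\<not> isS u)"
  unfolding traverses_def isS_def by (cases e) auto

lemma walkD: "is_walk SS RR a b W \<Longrightarrow> i < length (snd W) \<Longrightarrow>
   dsr_edge SS RR a b (snd W ! i) \<and> traverses (snd W ! i) (fst W ! i) (fst W ! Suc i)"
  unfolding is_walk_def by blast

lemma alt: assumes "is_walk SS RR a b W" "i \<le> length (snd W)"
  shows "isS (fst W ! i) = (if even i then isS (fst W ! 0) else \<not> isS (fst W ! 0))"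
  using assms(2)
proof (induction i)
  case 0 then show ?case by simp
next
  case (Suc i)
  then have "traverses (snd W ! i) (fst W ! i) (fst W ! Suc i)" using walkD[OF assms(1)] by simp
  from trav_isS[OF this] Suc show ?case by auto
qed

lemma closed_last: assumes "is_walk SS RR a b W" "closed_walk W"
  shows "fst W ! length (snd W) = fst W ! 0"
proof -
  have l: "length (fst W) = Suc (length (snd W))" using assms(1) unfolding is_walk_def by blast
  then have "fst W \<noteq> []" by auto
  then show ?thesis using assms(2) l unfolding closed_walk_def by (simp add: hd_conv_nth last_conv_nth)
qed

lemma closed_even: assumes "is_walk SS RR a b W" "closed_walk W"
  shows "even (length (snd W))"
  using alt[OF assms(1), of "length (snd W)"] closed_last[OF assms] by (auto split: if_splits)

lemma edge_props: "dsr_edge (S2 n) (R2 n m) (LA A) (LB B) ((p,q),(k,l),kd) \<Longrightarrow>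
   p < q \<and> (l = p \<or> l = q)"
  unfolding dsr_edge_def LA_def LB_def S2_def by (auto split: ekind.splits if_splits)

lemma label_proj: "p \<noteq> q \<Longrightarrow> l = p \<or> l = q \<Longrightarrow>
   dsr_label A (proj_edge ((p,q),(k,l),kd)) = dsr_label (LA A) ((p,q),(k,l),kd)"
  unfolding dsr_label_def proj_edge_def LA_def other_def by auto

lemma norm_props: assumes "is_cycle SS RR a b C"
  shows "is_walk SS RR a b (norm_cycle C) \<and> closed_walk (norm_cycle C) \<and> isS (fst (norm_cycle C) ! 0)
    \<and> (\<forall>f. set (map f (snd (norm_cycle C))) = set (map f (snd C)) \<and>
         (PE (map f (snd (norm_cycle C))) = PO (map f (snd (norm_cycle C))) \<longleftrightarrow>
          PE (map f (snd C)) = PO (map f (snd C))))"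
proof -
  have W: "is_walk SS RR a b C" and ne: "snd C \<noteq> []" and cl: "closed_walk C"
    using assms unfolding is_cycle_def by auto
  define vs where "vs = fst C"
  define es where "es = snd C"
  have len: "length vs = Suc (length es)" using W unfolding is_walk_def vs_def es_def by blast
  have ev: "even (length es)" using closed_even[OF W cl] es_def by simp
  show ?thesis
  proof (cases "hd vs")
    case (SV s)
    then have "norm_cycle C = C" unfolding norm_cycle_def vs_def by simp
    moreover have "isS (vs ! 0)" using SV len by (cases vs) (auto simp: isS_def)
    ultimately show ?thesis using W cl vs_def by auto
  next
    case (RV r)
    have h0: "\<not> isS (vs ! 0)" using RV len by (cases vs) (auto simp: isS_def)
    have N2: "length es \<ge> 2" using ev ne es_def by (cases "length es") (auto, presburger)
    have D: "norm_cycle C = (tl vs @ [vs ! 1], tl es @ [hd es])"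
      unfolding norm_cycle_def vs_def[symmetric] es_def[symmetric] using RV len N2
      by (cases vs; cases "tl vs") auto
    have "isS (vs ! 1)" using alt[OF W, of 1] h0 N2 vs_def es_def by simp
    moreover have last0: "vs ! length es = vs ! 0" using closed_last[OF W cl] vs_def es_def by simp
    have walkD': "\<And>i. i < length es \<Longrightarrow> dsr_edge SS RR a b (es ! i) \<and> traverses (es ! i) (vs ! i) (vs ! Suc i)"
      using walkD[OF W] vs_def es_def by blast
    have nes: "es \<noteq> []" using ne es_def by simp
    have hd0: "hd es = es ! 0" using ne es_def by (simp add: hd_conv_nth)
    have inv: "\<And>v. v \<in> set vs \<Longrightarrow> in_vertices SS RR v" using W vs_def unfolding is_walk_def by blast
    have "is_walk SS RR a b (norm_cycle C)"
      unfolding is_walk_def D fst_conv snd_conv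
    proof (intro conjI allI impI ballI)
      show "length (tl vs @ [vs ! 1]) = Suc (length (tl es @ [hd es]))" using len N2 by simp
    next
      fix v assume "v \<in> set (tl vs @ [vs ! 1])"
      moreover have "set (tl vs) \<subseteq> set vs" using len by (cases vs) auto
      moreover have "vs ! 1 \<in> set vs" using len N2 by (intro nth_mem) auto
      ultimately show "in_vertices SS RR v" using inv by auto
    next
      fix i assume i: "i < length (tl es @ [hd es])"
      show "dsr_edge SS RR a b ((tl es @ [hd es]) ! i)"
        using i walkD'[of 0] walkD'[of "Suc i"] N2 nes
        by (cases "i < length es - 1") (auto simp: nth_append nth_tl hd0)
      show "traverses ((tl es @ [hd es]) ! i) ((tl vs @ [vs ! 1]) ! i) ((tl vs @ [vs ! 1]) ! Suc i)"
      proof (cases "i < length es - 1")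
        case True then show ?thesis using walkD'[of "Suc i"] len
          by (auto simp: nth_append nth_tl)
      next
        case False
        then have "i = length es - 1" using i by simp
        then show ?thesis using walkD'[of 0] len N2 last0 nes
          by (auto simp: nth_append nth_tl hd0)
      qed
    qed
    moreover have "closed_walk (norm_cycle C)"
      unfolding closed_walk_def D using len N2 by (cases vs; cases "tl vs") auto
    moreover have "isS (fst (norm_cycle C) ! 0)"
      unfolding D using \<open>isS (vs ! 1)\<close> len N2 by (cases vs; cases "tl vs") (auto)
    moreover have "\<forall>f. set (map f (snd (norm_cycle C))) = set (map f (snd C)) \<and>
         (PE (map f (snd (norm_cycle C))) = PO (map f (snd (norm_cycle C))) \<longleftrightarrow>
          PE (map f (snd C)) = PO (map f (snd C)))"
    proof
      fix f :: "_ \<Rightarrow> ereal"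
      have m: "map f (snd (norm_cycle C)) = tl (map f es) @ [hd (map f es)]"
        unfolding D using ne es_def by (simp add: map_tl hd_map)
      have ne2: "map f es \<noteq> []" using nes by simp
      have "set (tl (map f es) @ [hd (map f es)]) = set (map f es)" using ne2 by (cases "map f es") auto
      moreover have "PE (tl (map f es) @ [hd (map f es)]) = PO (map f es) \<and> PO (tl (map f es) @ [hd (map f es)]) = PE (map f es)"
        using PE_rot[OF _ ne2] ev by simp
      ultimately show "set (map f (snd (norm_cycle C))) = set (map f (snd C)) \<and>
         (PE (map f (snd (norm_cycle C))) = PO (map f (snd (norm_cycle C))) \<longleftrightarrow>
          PE (map f (snd C)) = PO (map f (snd C)))"
        unfolding m es_def[symmetric] by auto
    qed
    ultimately show ?thesis by blast
  qed
qed



definition INV where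
  "INV A D t a1 b1 W1 W2 \<longleftrightarrow> fst W1 \<noteq> [] \<and> fst W2 \<noteq> [] \<and> hd (fst W1) = SV a1 \<and> hd (fst W2) = SV b1 \<and>
    even (length (snd W1)) \<and> even (length (snd W2)) \<and>
    (\<exists>p q. fst D ! (2*t) = SV (p,q) \<and>
       ((last (fst W1) = SV p \<and> last (fst W2) = SV q) \<or> (last (fst W1) = SV q \<and> last (fst W2) = SV p))) \<and>
    PE (map (dsr_label A) (snd W1)) * PE (map (dsr_label A) (snd W2)) = PE (take (2*t) (map (dsr_label (LA A)) (snd D))) \<and>
    PO (map (dsr_label A) (snd W1)) * PO (map (dsr_label A) (snd W2)) = PO (take (2*t) (map (dsr_label (LA A)) (snd D))) \<and>
    set (map (dsr_label A) (snd W1)) \<union> set (map (dsr_label A) (snd W2)) = set (take (2*t) (map (dsr_label (LA A)) (snd D)))"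

lemma trav_SR: "traverses e (SV s) (RV r) \<Longrightarrow> \<exists>kd. e = (s, r, kd)"
  unfolding traverses_def by (cases e) auto
lemma trav_RS: "traverses e (RV r) (SV s) \<Longrightarrow> \<exists>kd. e = (s, r, kd)"
  unfolding traverses_def by (cases e) auto

lemma isS_SV: "isS v \<Longrightarrow> \<exists>s. v = SV s" unfolding isS_def by (cases v) auto
lemma isS_RV: "\<not> isS v \<Longrightarrow> \<exists>r. v = RV r" unfolding isS_def by (cases v) auto

lemma step:
  assumes W: "is_walk (S2 n) (R2 n m) (LA A) (LB B) D" and h: "isS (fst D ! 0)"
    and t: "2 * Suc t \<le> length (snd D)"
    and I: "INV A D t a1 b1 W1 W2"
  shows "INV A D (Suc t) a1 b1 (fst (proj_step D t (W1,W2))) (snd (proj_step D t (W1,W2)))"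
proof -
  define vs where "vs = fst D"
  define es where "es = snd D"
  define L where "L = map (dsr_label (LA A)) es"
  from I obtain p q where P: "vs ! (2*t) = SV (p,q)"
    and lasts: "(last (fst W1) = SV p \<and> last (fst W2) = SV q) \<or> (last (fst W1) = SV q \<and> last (fst W2) = SV p)"
    unfolding INV_def vs_def by blast
  have "\<not> isS (vs ! (2*t+1))" using alt[OF W, of "2*t+1"] h t vs_def by simp
  then obtain k l where R: "vs ! (2*t+1) = RV (k,l)" using isS_RV by (metis prod.collapse)
  have "isS (vs ! (2*t+2))" using alt[OF W, of "2*t+2"] h t vs_def by simp
  then obtain p' q' where Q: "vs ! (2*t+2) = SV (p',q')" using isS_SV by (metis prod.collapse)
  have E0: "dsr_edge (S2 n) (R2 n m) (LA A) (LB B) (es ! (2*t)) \<and> traverses (es ! (2*t)) (vs ! (2*t)) (vs ! (2*t+1))"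
    using walkD[OF W, of "2*t"] t vs_def es_def by simp
  have E1: "dsr_edge (S2 n) (R2 n m) (LA A) (LB B) (es ! (2*t+1)) \<and> traverses (es ! (2*t+1)) (vs ! (2*t+1)) (vs ! (2*t+2))"
    using walkD[OF W, of "2*t+1"] t vs_def es_def by simp
  obtain kd0 where e0: "es ! (2*t) = ((p,q),(k,l),kd0)" using trav_SR E0 P R by metis
  obtain kd1 where e1: "es ! (2*t+1) = ((p',q'),(k,l),kd1)" using trav_RS E1 Q R by metis
  have pq: "p < q \<and> (l = p \<or> l = q)" using edge_props E0 e0 by metis
  have pq': "p' < q' \<and> (l = p' \<or> l = q')" using edge_props E1 e1 by metis
  define x where "x = other l (p,q)"
  define y where "y = other l (p',q')"
  define seg where "seg = ([RV k, SV y], [proj_edge (es ! (2*t)), proj_edge (es ! (2*t+1))])"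
  have PS: "proj_step D t (W1,W2) = (if last (fst W1) = SV x then (append_seg W1 seg, W2) else (W1, append_seg W2 seg))"
    unfolding proj_step_def Let_def seg_def x_def y_def vs_def[symmetric] es_def[symmetric]
    using P Q R by (simp add: numeral_2_eq_2)
  have lab: "map (dsr_label A) (snd seg) = [L ! (2*t), L ! (2*t+1)]"
    unfolding seg_def L_def using t e0 e1 pq pq' label_proj es_def
    by (simp add: label_proj)
  have tk: "take (2 * Suc t) L = take (2*t) L @ [L ! (2*t), L ! (2*t+1)]"
    using t unfolding L_def es_def
    by (simp add: take_Suc_conv_app_nth)
  have x_in: "(x = p \<and> l = q) \<or> (x = q \<and> l = p)" using pq unfolding x_def other_def by auto
  have y_in: "(y = p' \<and> l = q') \<or> (y = q' \<and> l = p')" using pq' unfolding y_def other_def by auto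
  have lab0: "dsr_label A (proj_edge (es ! (2*t))) = L ! (2*t)"
    unfolding L_def using t e0 pq es_def by (simp add: label_proj)
  have lab1: "dsr_label A (proj_edge (es ! (2*t+1))) = L ! (2*t+1)"
    unfolding L_def using t e1 pq' es_def by (simp add: label_proj)
  have lt: "length (take (2*t) L) = 2*t" using t unfolding L_def es_def by simp
  have PEt: "PE (take (2*Suc t) L) = PE (take (2*t) L) * L!(2*t)"
    and POt: "PO (take (2*Suc t) L) = PO (take (2*t) L) * L!(2*t+1)"
    and St: "set (take (2*Suc t) L) = set (take (2*t) L) \<union> {L!(2*t), L!(2*t+1)}"
    unfolding tk using lt by auto
  have ms: "map (dsr_label A) (snd seg) = [L!(2*t), L!(2*t+1)]" unfolding seg_def using lab0 lab1 by simp
  have fs: "fst seg = [RV k, SV y]" unfolding seg_def by simp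
  have I': "fst W1 \<noteq> [] \<and> fst W2 \<noteq> [] \<and> hd (fst W1) = SV a1 \<and> hd (fst W2) = SV b1 \<and>
    even (length (snd W1)) \<and> even (length (snd W2)) \<and>
    PE (map (dsr_label A) (snd W1)) * PE (map (dsr_label A) (snd W2)) = PE (take (2*t) L) \<and>
    PO (map (dsr_label A) (snd W1)) * PO (map (dsr_label A) (snd W2)) = PO (take (2*t) L) \<and>
    set (map (dsr_label A) (snd W1)) \<union> set (map (dsr_label A) (snd W2)) = set (take (2*t) L)"
    using I unfolding INV_def L_def es_def by blast
  have EE: "PE (take (2*t) L) = PE (map (dsr_label A) (snd W1)) * PE (map (dsr_label A) (snd W2))"
    "PO (take (2*t) L) = PO (map (dsr_label A) (snd W1)) * PO (map (dsr_label A) (snd W2))"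
    using I' by auto
  define tk0 where "tk0 = take (2*t) L"
  have I'': "fst W1 \<noteq> [] \<and> fst W2 \<noteq> [] \<and> hd (fst W1) = SV a1 \<and> hd (fst W2) = SV b1 \<and>
    even (length (snd W1)) \<and> even (length (snd W2)) \<and>
    set (map (dsr_label A) (snd W1)) \<union> set (map (dsr_label A) (snd W2)) = set tk0"
    using I' tk0_def by blast
  have EE': "PE tk0 = PE (map (dsr_label A) (snd W1)) * PE (map (dsr_label A) (snd W2))"
    "PO tk0 = PO (map (dsr_label A) (snd W1)) * PO (map (dsr_label A) (snd W2))"
    using EE tk0_def by auto
  have ls: "length (snd seg) = 2" unfolding seg_def by simp
  show ?thesis
  proof (cases "last (fst W1) = SV x")
    case True
    then have l2: "last (fst W2) = SV l" using lasts x_in pq by auto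
    have "INV A D (Suc t) a1 b1 (append_seg W1 seg) W2"
      unfolding INV_def append_seg_def fst_conv snd_conv L_def[symmetric] es_def[symmetric] vs_def[symmetric]
        map_append ms PEt POt St fs tk0_def[symmetric]
      using I'' l2 y_in Q ls
      by (auto simp: EE' mult_ac)
    then show ?thesis unfolding PS using True by simp
  next
    case False
    then have l2: "last (fst W2) = SV x" "last (fst W1) = SV l" using lasts x_in pq by auto
    have "INV A D (Suc t) a1 b1 W1 (append_seg W2 seg)"
      unfolding INV_def append_seg_def fst_conv snd_conv L_def[symmetric] es_def[symmetric] vs_def[symmetric]
        map_append ms PEt POt St fs tk0_def[symmetric]
      using I'' l2 y_in Q ls
      by (auto simp: EE' mult_ac)
    then show ?thesis unfolding PS using False by simp
  qed
qed



lemma fold_inv: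
  assumes W: "is_walk (S2 n) (R2 n m) (LA A) (LB B) D" and h: "fst D ! 0 = SV (a1,b1)"
  shows "2 * t \<le> length (snd D) \<Longrightarrow>
    INV A D t a1 b1 (fst (fold (proj_step D) [0..<t] (([SV a1],[]),([SV b1],[]))))
                    (snd (fold (proj_step D) [0..<t] (([SV a1],[]),([SV b1],[]))))"
proof (induction t)
  case 0
  then show ?case unfolding INV_def using h by simp
next
  case (Suc t)
  have hS: "isS (fst D ! 0)" using h by (simp add: isS_def)
  define F where "F = fold (proj_step D) [0..<t] (([SV a1],[]),([SV b1],[]))"
  have "INV A D t a1 b1 (fst F) (snd F)" using Suc F_def by simp
  from step[OF W hS Suc.prems this]
  show ?case unfolding F_def by simp
qed

theorem proposition5p4:
  fixes n m :: nat and A B :: "nat \<Rightarrow> nat \<Rightarrow> real"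
    and C :: "(nat \<times> nat, nat \<times> nat) walk"
  assumes "n \<ge> 2"
    and "is_cycle (S2 n) (R2 n m) (LA A) (LB B) C"
  shows "(is_twisted C \<longrightarrow>
            (s_walk A (proj_twisted C) \<longleftrightarrow> s_cycle (S2 n) (R2 n m) (LA A) (LB B) C))
       \<and> (is_direct C \<and> s_walk A (fst (proj_pair C)) \<and> s_walk A (snd (proj_pair C))
            \<longrightarrow> s_cycle (S2 n) (R2 n m) (LA A) (LB B) C)"
proof -
  note cyc = assms(2)
  define D where "D = norm_cycle C"
  have NP: "is_walk (S2 n) (R2 n m) (LA A) (LB B) D \<and> closed_walk D \<and> isS (fst D ! 0)
    \<and> (\<forall>f. set (map f (snd D)) = set (map f (snd C)) \<and>
         (PE (map f (snd D)) = PO (map f (snd D)) \<longleftrightarrow> PE (map f (snd C)) = PO (map f (snd C))))"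
    using norm_props[OF cyc] D_def by simp
  then have W: "is_walk (S2 n) (R2 n m) (LA A) (LB B) D" and clD: "closed_walk D" and hS: "isS (fst D ! 0)"
    by auto
  define L where "L = map (dsr_label (LA A)) (snd D)"
  have LC: "set L = set (map (dsr_label (LA A)) (snd C))"
    "(PE L = PO L) = (PE (map (dsr_label (LA A)) (snd C)) = PO (map (dsr_label (LA A)) (snd C)))"
    using NP L_def by auto
  have clC: "closed_walk C" using cyc unfolding is_cycle_def by simp
  have scyc: "s_cycle (S2 n) (R2 n m) (LA A) (LB B) C \<longleftrightarrow> (\<forall>x\<in>set L. x \<noteq> \<infinity>) \<and> PE L = PO L"
    unfolding s_cycle_def s_walk_iff using cyc clC LC by auto
  have lenD: "length (fst D) = Suc (length (snd D))" using W unfolding is_walk_def by blast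
  have hdD: "hd (fst D) = fst D ! 0" using lenD by (cases "fst D") auto
  obtain a1 b1 where h0: "fst D ! 0 = SV (a1,b1)" using isS_SV[OF hS] by (metis prod.collapse)
  have "in_vertices (S2 n) (R2 n m) (fst D ! 0)" using W lenD unfolding is_walk_def by auto
  then have ab: "a1 < b1" using h0 unfolding in_vertices_def S2_def by auto
  define N where "N = length (snd D)"
  have evN: "even N" using closed_even[OF W clD] N_def by simp
  define T where "T = N div 2"
  have NT: "2 * T = N" using evN T_def by simp
  have PP: "proj_pair C = fold (proj_step D) [0..<T] (([SV a1],[]),([SV b1],[]))"
    unfolding proj_pair_def Let_def D_def[symmetric] T_def N_def hdD h0 by simp
  define W1 where "W1 = fst (proj_pair C)"
  define W2 where "W2 = snd (proj_pair C)"
  have I: "INV A D T a1 b1 W1 W2" unfolding W1_def W2_def PP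
    using fold_inv[OF W h0, of T] NT N_def by simp
  have lastN: "fst D ! (2*T) = SV (a1,b1)" using closed_last[OF W clD] h0 NT N_def by simp
  have tk: "take (2*T) L = L" using NT N_def L_def by simp
  define L1 where "L1 = map (dsr_label A) (snd W1)"
  define L2 where "L2 = map (dsr_label A) (snd W2)"
  have I': "fst W1 \<noteq> [] \<and> fst W2 \<noteq> [] \<and> hd (fst W1) = SV a1 \<and> hd (fst W2) = SV b1 \<and>
    even (length L1) \<and> even (length L2) \<and>
    ((last (fst W1) = SV a1 \<and> last (fst W2) = SV b1) \<or> (last (fst W1) = SV b1 \<and> last (fst W2) = SV a1)) \<and>
    PE L1 * PE L2 = PE L \<and> PO L1 * PO L2 = PO L \<and> set L1 \<union> set L2 = set L"
  proof -
    from I obtain p q where pq: "fst D ! (2*T) = SV (p,q)"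
      and ls: "(last (fst W1) = SV p \<and> last (fst W2) = SV q) \<or> (last (fst W1) = SV q \<and> last (fst W2) = SV p)"
      unfolding INV_def by blast
    have "p = a1" "q = b1" using pq lastN by auto
    moreover have "fst W1 \<noteq> [] \<and> fst W2 \<noteq> [] \<and> hd (fst W1) = SV a1 \<and> hd (fst W2) = SV b1 \<and>
      even (length L1) \<and> even (length L2) \<and>
      PE L1 * PE L2 = PE L \<and> PO L1 * PO L2 = PO L \<and> set L1 \<union> set L2 = set L"
      using I tk unfolding INV_def L1_def L2_def L_def length_map by metis
    ultimately show ?thesis using ls by blast
  qed
  have dir: "is_direct C \<longleftrightarrow> last (fst W1) = SV a1 \<and> last (fst W2) = SV b1"
    unfolding is_direct_def closed_walk_def W1_def[symmetric] W2_def[symmetric] using I' by metis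
  have part1: "is_twisted C \<longrightarrow>
            (s_walk A (proj_twisted C) \<longleftrightarrow> s_cycle (S2 n) (R2 n m) (LA A) (LB B) C)"
  proof
    assume tw: "is_twisted C"
    then have nd: "\<not> (last (fst W1) = SV a1 \<and> last (fst W2) = SV b1)" using dir unfolding is_twisted_def by simp
    have dj: "(last (fst W1) = SV a1 \<and> last (fst W2) = SV b1) \<or> (last (fst W1) = SV b1 \<and> last (fst W2) = SV a1)"
      using I' by blast
    have la: "last (fst W1) = SV b1" "last (fst W2) = SV a1" using nd dj by auto
    have "tl (fst W2) \<noteq> []"
    proof
      assume "tl (fst W2) = []"
      then have "fst W2 = [SV b1]" using I' by (cases "fst W2") auto
      then show False using la ab by simp
    qed
    then have cl: "closed_walk (proj_twisted C)"
      unfolding closed_walk_def proj_twisted_def Let_def W1_def[symmetric] W2_def[symmetric]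
      using I' la by (cases "fst W2") auto
    have m: "map (dsr_label A) (snd (proj_twisted C)) = L1 @ L2"
      unfolding proj_twisted_def Let_def W1_def[symmetric] W2_def[symmetric] L1_def L2_def by simp
    show "s_walk A (proj_twisted C) \<longleftrightarrow> s_cycle (S2 n) (R2 n m) (LA A) (LB B) C"
    proof -
      have ev1: "even (length L1)" using I' by blast
      have "set (L1 @ L2) = set L" using I' by auto
      moreover have "PE (L1 @ L2) = PE L" "PO (L1 @ L2) = PO L" using I' ev1 by auto
      ultimately show ?thesis unfolding s_walk_iff scyc m using cl by simp
    qed
  qed
  have part2: "is_direct C \<and> s_walk A W1 \<and> s_walk A W2 \<longrightarrow> s_cycle (S2 n) (R2 n m) (LA A) (LB B) C"
  proof
    assume "is_direct C \<and> s_walk A W1 \<and> s_walk A W2"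
    then have s1: "(\<forall>x\<in>set L1. x \<noteq> \<infinity>) \<and> PE L1 = PO L1" and s2: "(\<forall>x\<in>set L2. x \<noteq> \<infinity>) \<and> PE L2 = PO L2"
      unfolding s_walk_iff L1_def L2_def by auto
    have "PE L = PO L" using I' s1 s2 by metis
    moreover have "\<forall>x\<in>set L. x \<noteq> \<infinity>" using I' s1 s2 by blast
    ultimately show "s_cycle (S2 n) (R2 n m) (LA A) (LB B) C" using scyc by simp
  qed
  show ?thesis using part1 part2 W1_def W2_def by simp
qed

end
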